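(* Consider the zooming algorithm on an instance of the Lipschitz MAB problem. If phase $i$ is clean, then $\Delta(v)\le 4\,r_t(v)$ for every round $t$ of the phase and every strategy $v$ that is active at time $t$. Consequently $n_t(v)\le O(i)\,\Delta(v)^{-2}$ for such $v$ (absolute constant in $O(\cdot)$).
   Context: Lipschitz MAB problem on $(L,X)$ of diameter $\le1$: unknown $\mu:X\to[0,1]$ with $|\mu(x)-\mu(y)|\le L(x,y)$; playing $v$ yields an independent sample in $[0,1]$ of mean $\mu(v)$. $\mu^*=\sup_X\mu$ (not necessarily attained), $\Delta(v)=\mu^*-\mu(v)$. Zooming algorithm: phases $i=1,2,\dots$ of $2^i$ rounds; within phase $i$, $n_t(v)$ = number of plays of $v$ in this phase before round $t$, $\mu_t(v)$ = their average reward ($0$ if none), $r_t(v)=\sqrt{8i/(2+n_t(v))}$, $I_t(v)=\mu_t(v)+2r_t(v)$; at phase start nothing is active; $u$ is covered at $t$ if $u\in B(v,r_t(v))$ (open ball) for some active $v$; in each round, if some strategy is uncovered one such is activated, then an active strategy of maximal index is played (ties arbitrary). Phase $i$ is clean if $|\mu_t(v)-\mu(v)|\le r_t(v)$ for every strategy $v$ played at least once in the phase and every round $t$ of the phase. *)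

theory Defs
  imports Complex_Main
begin

definition lipschitz_instance :: "'a set \<Rightarrow> ('a \<Rightarrow> 'a \<Rightarrow> real) \<Rightarrow> ('a \<Rightarrow> real) \<Rightarrow> bool" where
  "lipschitz_instance X L mu \<longleftrightarrow>
     (\<forall>x\<in>X. \<forall>y\<in>X. 0 \<le> L x y \<and> (L x y = 0 \<longleftrightarrow> x = y) \<and> L x y = L y x \<and>
         (\<forall>z\<in>X. L x z \<le> L x y + L y z) \<and> L x y \<le> 1) \<and>
     (\<forall>x\<in>X. 0 \<le> mu x \<and> mu x \<le> 1) \<and>
     (\<forall>x\<in>X. \<forall>y\<in>X. \<bar>mu x - mu y\<bar> \<le> L x y)"

definition mu_star :: "'a set \<Rightarrow> ('a \<Rightarrow> real) \<Rightarrow> real" where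
  "mu_star X mu = (SUP x\<in>X. mu x)"

definition gap :: "'a set \<Rightarrow> ('a \<Rightarrow> real) \<Rightarrow> 'a \<Rightarrow> real" where
  "gap X mu v = mu_star X mu - mu v"

text \<open>A run of phase i: rounds are numbered 0,...,2^i-1 inside the phase.
  act t = strategy activated in round t (None if none), play t = strategy played in round t,
  rew t = reward observed in round t.\<close>

definition nplays :: "(nat \<Rightarrow> 'a) \<Rightarrow> nat \<Rightarrow> 'a \<Rightarrow> nat" where
  "nplays play t v = card {s. s < t \<and> play s = v}"

definition avg_rew :: "(nat \<Rightarrow> 'a) \<Rightarrow> (nat \<Rightarrow> real) \<Rightarrow> nat \<Rightarrow> 'a \<Rightarrow> real" where
  "avg_rew play rew t v =
     (if nplays play t v = 0 then 0
      else (\<Sum>s\<in>{s. s < t \<and> play s = v}. rew s) / real (nplays play t v))"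

definition conf_rad :: "nat \<Rightarrow> (nat \<Rightarrow> 'a) \<Rightarrow> nat \<Rightarrow> 'a \<Rightarrow> real" where
  "conf_rad i play t v = sqrt (8 * real i / (2 + real (nplays play t v)))"

definition zindex :: "nat \<Rightarrow> (nat \<Rightarrow> 'a) \<Rightarrow> (nat \<Rightarrow> real) \<Rightarrow> nat \<Rightarrow> 'a \<Rightarrow> real" where
  "zindex i play rew t v = avg_rew play rew t v + 2 * conf_rad i play t v"

text \<open>Strategies activated in rounds strictly before t (so active_set act (Suc t) is the set of
  strategies active in round t after that round's activation step).\<close>
definition active_set :: "(nat \<Rightarrow> 'a option) \<Rightarrow> nat \<Rightarrow> 'a set" where
  "active_set act t = {v. \<exists>s<t. act s = Some v}"

definition covered :: "('a \<Rightarrow> 'a \<Rightarrow> real) \<Rightarrow> nat \<Rightarrow> (nat \<Rightarrow> 'a option) \<Rightarrow> (nat \<Rightarrow> 'a) \<Rightarrow> nat \<Rightarrow> 'a \<Rightarrow> bool" where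
  "covered L i act play t u \<longleftrightarrow> (\<exists>v\<in>active_set act t. L v u < conf_rad i play t v)"

definition zooming_phase_run ::
  "'a set \<Rightarrow> ('a \<Rightarrow> 'a \<Rightarrow> real) \<Rightarrow> ('a \<Rightarrow> real) \<Rightarrow> nat \<Rightarrow>
   (nat \<Rightarrow> 'a option) \<Rightarrow> (nat \<Rightarrow> 'a) \<Rightarrow> (nat \<Rightarrow> real) \<Rightarrow> bool" where
  "zooming_phase_run X L mu i act play rew \<longleftrightarrow>
     1 \<le> i \<and> lipschitz_instance X L mu \<and>
     (\<forall>t < 2 ^ i.
        (if (\<exists>u\<in>X. \<not> covered L i act play t u)
         then (\<exists>u\<in>X. \<not> covered L i act play t u \<and> act t = Some u)
         else act t = None) \<and>
        play t \<in> active_set act (Suc t) \<and>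
        (\<forall>w\<in>active_set act (Suc t). zindex i play rew t w \<le> zindex i play rew t (play t)) \<and>
        0 \<le> rew t \<and> rew t \<le> 1)"

definition clean_phase :: "('a \<Rightarrow> real) \<Rightarrow> nat \<Rightarrow> (nat \<Rightarrow> 'a) \<Rightarrow> (nat \<Rightarrow> real) \<Rightarrow> bool" where
  "clean_phase mu i play rew \<longleftrightarrow>
     (\<forall>v t. t < 2 ^ i \<and> (\<exists>s < 2 ^ i. play s = v) \<longrightarrow>
        \<bar>avg_rew play rew t v - mu v\<bar> \<le> conf_rad i play t v)"

end

theory Submission
  imports Defs
begin

lemma nplays_last:
  assumes "s < t" "play s = v" "\<forall>s'. s < s' \<and> s' < t \<longrightarrow> play s' \<noteq> v"
  shows "nplays play t v = Suc (nplays play s v)"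
proof -
  have "{s'. s' < t \<and> play s' = v} = insert s {s'. s' < s \<and> play s' = v}"
    using assms by (auto, metis linorder_neqE_nat)
  then show ?thesis unfolding nplays_def by simp
qed

lemma conf_pos: "1 \<le> i \<Longrightarrow> conf_rad i play t v > 0"
  unfolding conf_rad_def by simp

lemma conf_zero: assumes "1 \<le> i" "nplays play t v = 0" shows "conf_rad i play t v \<ge> 2"
proof -
  have "(2::real)^2 \<le> 8 * real i / (2 + real (nplays play t v))" using assms by simp
  then show ?thesis unfolding conf_rad_def by (rule real_le_rsqrt)
qed

lemma run_facts:
  assumes "zooming_phase_run X L mu i act play rew"
  shows "1 \<le> i" "lipschitz_instance X L mu"
    "\<And>t. t < 2^i \<Longrightarrow> (if (\<exists>u\<in>X. \<not> covered L i act play t u)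
         then (\<exists>u\<in>X. \<not> covered L i act play t u \<and> act t = Some u)
         else act t = None)"
    "\<And>t. t < 2^i \<Longrightarrow> play t \<in> active_set act (Suc t)"
    "\<And>t w. t < 2^i \<Longrightarrow> w\<in>active_set act (Suc t) \<Longrightarrow> zindex i play rew t w \<le> zindex i play rew t (play t)"
  using assms unfolding zooming_phase_run_def by auto

lemma active_in_X:
  assumes "zooming_phase_run X L mu i act play rew" "w \<in> active_set act T" "T \<le> 2^i"
  shows "w \<in> X"
proof -
  obtain s where s: "s < T" "act s = Some w" using assms(2) unfolding active_set_def by auto
  have "s < 2^i" using s assms(3) by simp
  from run_facts(3)[OF assms(1) this] s show ?thesis by (auto split: if_splits)
qed

lemma avg_lower:
  assumes "zooming_phase_run X L mu i act play rew" "clean_phase mu i play rew"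
    "w \<in> X" "s < 2^i"
  shows "avg_rew play rew s w \<ge> mu w - conf_rad i play s w"
proof (cases "\<exists>s'<2^i. play s' = w")
  case True
  then show ?thesis using assms(2,4) unfolding clean_phase_def by fastforce
next
  case False
  have i1: "1 \<le> i" using run_facts(1)[OF assms(1)] .
  have "{s'. s' < s \<and> play s' = w} = {}" using False assms(4) by auto
  then have n0: "nplays play s w = 0" unfolding nplays_def by simp
  have "mu w \<le> 1" using assms(1,3) unfolding zooming_phase_run_def lipschitz_instance_def by auto
  then show ?thesis using conf_zero[OF i1 n0] n0 unfolding avg_rew_def by simp
qed

lemma index_lower:
  assumes "zooming_phase_run X L mu i act play rew" "clean_phase mu i play rew"
    "w \<in> X" "x \<in> X" "s < 2^i" "L w x < conf_rad i play s w"
  shows "mu x \<le> zindex i play rew s w"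
proof -
  have "\<bar>mu w - mu x\<bar> \<le> L w x" using assms(1,3,4)
    unfolding zooming_phase_run_def lipschitz_instance_def by auto
  then show ?thesis using avg_lower[OF assms(1,2,3,5)] assms(6) unfolding zindex_def by linarith
qed

lemma part1:
  assumes run: "zooming_phase_run X L mu i act play rew" and cl: "clean_phase mu i play rew"
    and t: "t < 2 ^ i" and v: "v \<in> active_set act (Suc t)"
  shows "gap X mu v \<le> 4 * conf_rad i play t v"
proof -
  have i1: "1 \<le> i" using run_facts(1)[OF run] .
  have vX: "v \<in> X" using active_in_X[OF run v] t by simp
  have mu01: "\<And>x. x \<in> X \<Longrightarrow> 0 \<le> mu x \<and> mu x \<le> 1"
    using run unfolding zooming_phase_run_def lipschitz_instance_def by auto
  have ne: "X \<noteq> {}" using vX by auto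
  have star1: "mu_star X mu \<le> 1" unfolding mu_star_def using ne mu01 by (intro cSUP_least) auto
  have gap1: "gap X mu v \<le> 1" unfolding gap_def using star1 mu01[OF vX] by simp
  show ?thesis
  proof (cases "nplays play t v = 0")
    case True
    then show ?thesis using conf_zero[OF i1 True] gap1 by simp
  next
    case False
    define S where "S = {s. s < t \<and> play s = v}"
    have finS: "finite S" unfolding S_def by simp
    have neS: "S \<noteq> {}" using False unfolding nplays_def S_def by auto
    define s where "s = Max S"
    have sS: "s \<in> S" unfolding s_def using finS neS by simp
    have st: "s < t" and ps: "play s = v" using sS unfolding S_def by auto
    have later: "\<forall>s'. s < s' \<and> s' < t \<longrightarrow> play s' \<noteq> v"
    proof (intro allI impI)
      fix s' assume a: "s < s' \<and> s' < t"
      show "play s' \<noteq> v"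
      proof
        assume "play s' = v"
        then have "s' \<in> S" using a unfolding S_def by simp
        then have "s' \<le> s" unfolding s_def using finS by simp
        then show False using a by simp
      qed
    qed
    have nst: "nplays play t v = Suc (nplays play s v)" using nplays_last[OF st ps later] .
    have s2: "s < 2^i" using st t by simp
    define r where "r = conf_rad i play s v"
    define r' where "r' = conf_rad i play t v"
    have rr: "3 * r \<le> 4 * r'"
    proof -
      define n where "n = real (nplays play s v)"
      have n0: "n \<ge> 0" unfolding n_def by simp
      have h9: "sqrt 9 = (3::real)" using real_sqrt_abs[of 3] by simp
      have h16: "sqrt 16 = (4::real)" using real_sqrt_abs[of 4] by simp
      have "3 * r = sqrt 9 * sqrt (8 * real i / (2 + n))"
        unfolding r_def conf_rad_def n_def h9 by simp
      also have "\<dots> = sqrt (9 * (8 * real i / (2 + n)))" by (rule real_sqrt_mult[symmetric])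
      finally have e1: "3 * r = sqrt (9 * (8 * real i / (2 + n)))" .
      have n3: "2 + real (nplays play t v) = 3 + n" using nst unfolding n_def by simp
      have "4 * r' = sqrt 16 * sqrt (8 * real i / (3 + n))"
        unfolding r'_def conf_rad_def n3 h16 by simp
      also have "\<dots> = sqrt (16 * (8 * real i / (3 + n)))" by (rule real_sqrt_mult[symmetric])
      finally have e2: "4 * r' = sqrt (16 * (8 * real i / (3 + n)))" .
      note e1 e2
      moreover have "9 * (8 * real i / (2 + n)) \<le> 16 * (8 * real i / (3 + n))"
        using n0 i1 by (simp add: field_simps)
      ultimately show ?thesis by simp
    qed
    have clv: "\<bar>avg_rew play rew s v - mu v\<bar> \<le> r"
      using cl s2 ps unfolding clean_phase_def r_def by blast
    have Iv: "zindex i play rew s v \<le> mu v + 3 * r" using clv unfolding zindex_def r_def by linarith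
    have vact: "v \<in> active_set act (Suc s)" using run_facts(4)[OF run s2] ps by simp
    have rpos: "r > 0" unfolding r_def using conf_pos[OF i1] .
    show ?thesis
    proof (cases "\<exists>u\<in>X. \<not> covered L i act play s u")
      case True
      then obtain u where u: "u \<in> X" "\<not> covered L i act play s u" "act s = Some u"
        using run_facts(3)[OF run s2] by auto
      have uact: "u \<in> active_set act (Suc s)" using u(3) unfolding active_set_def by auto
      have "nplays play s u = 0"
      proof (rule ccontr)
        assume "nplays play s u \<noteq> 0"
        then have "{sa. sa < s \<and> play sa = u} \<noteq> {}" unfolding nplays_def by (metis card.empty)
        then obtain s' where s': "s' < s" "play s' = u" by blast
        have "u \<in> active_set act (Suc s')" using run_facts(4)[OF run, of s'] s' s2 by simp
        then have ua: "u \<in> active_set act s" using s' unfolding active_set_def by (auto intro: exI[where x=sa for sa] simp: less_Suc_eq_le) (meson Suc_le_eq le_less_trans not_less_eq_eq)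
        have "L u u = 0" using u(1) run unfolding zooming_phase_run_def lipschitz_instance_def by auto
        then have "covered L i act play s u" unfolding covered_def using ua conf_pos[OF i1, of play s u] by (intro bexI[of _ u]) simp_all
        then show False using u(2) by simp
      qed
      then have "zindex i play rew s u \<ge> 4"
        using conf_zero[OF i1, of play s u] unfolding zindex_def avg_rew_def by simp
      moreover have "zindex i play rew s u \<le> zindex i play rew s v"
        using run_facts(5)[OF run s2 uact] ps by simp
      ultimately have "r \<ge> 1" using Iv mu01[OF vX] by linarith
      then show ?thesis using rr gap1 unfolding r'_def by linarith
    next
      case False
      have "\<And>x. x \<in> X \<Longrightarrow> mu x \<le> mu v + 3 * r"
      proof -
        fix x assume xX: "x \<in> X"
        then have "covered L i act play s x" using False by blast
        then obtain w where w: "w \<in> active_set act s" "L w x < conf_rad i play s w"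
          unfolding covered_def by blast
        have wX: "w \<in> X" using active_in_X[OF run w(1)] s2 by simp
        have wa: "w \<in> active_set act (Suc s)" using w(1) unfolding active_set_def using less_SucI by blast
        have "mu x \<le> zindex i play rew s w" using index_lower[OF run cl wX xX s2 w(2)] .
        also have "\<dots> \<le> zindex i play rew s v" using run_facts(5)[OF run s2 wa] ps by simp
        finally show "mu x \<le> mu v + 3 * r" using Iv by linarith
      qed
      then have "mu_star X mu \<le> mu v + 3 * r" unfolding mu_star_def using ne by (intro cSUP_least) auto
      then show ?thesis using rr unfolding gap_def r'_def by linarith
    qed
  qed
qed

theorem mainTheorem9:
  shows "(\<forall>(X :: 'a set) L mu i act play rew t v.
            zooming_phase_run X L mu i act play rew \<and> clean_phase mu i play rew \<and>
            t < 2 ^ i \<and> v \<in> active_set act (Suc t) \<longrightarrow>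
            gap X mu v \<le> 4 * conf_rad i play t v)
       \<and> (\<exists>C :: real. \<forall>(X :: 'a set) L mu i act play rew t v.
            zooming_phase_run X L mu i act play rew \<and> clean_phase mu i play rew \<and>
            t < 2 ^ i \<and> v \<in> active_set act (Suc t) \<and> gap X mu v > 0 \<longrightarrow>
            real (nplays play t v) \<le> C * real i / (gap X mu v)\<^sup>2)"
proof (intro conjI)
  show "\<forall>(X :: 'a set) L mu i act play rew t v.
            zooming_phase_run X L mu i act play rew \<and> clean_phase mu i play rew \<and>
            t < 2 ^ i \<and> v \<in> active_set act (Suc t) \<longrightarrow>
            gap X mu v \<le> 4 * conf_rad i play t v"
    apply (intro allI impI) apply (elim conjE) apply (erule (3) part1) done
  show "\<exists>C :: real. \<forall>(X :: 'a set) L mu i act play rew t v.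
            zooming_phase_run X L mu i act play rew \<and> clean_phase mu i play rew \<and>
            t < 2 ^ i \<and> v \<in> active_set act (Suc t) \<and> gap X mu v > 0 \<longrightarrow>
            real (nplays play t v) \<le> C * real i / (gap X mu v)\<^sup>2"
  proof (intro exI[of _ 128] allI impI)
    fix X :: "'a set" and L mu i act play rew t v
    assume a: "zooming_phase_run X L mu i act play rew \<and> clean_phase mu i play rew \<and>
            t < 2 ^ i \<and> v \<in> active_set act (Suc t) \<and> gap X mu v > 0"
    define g where "g = gap X mu v"
    define n where "n = real (nplays play t v)"
    have g0: "g > 0" using a g_def by simp
    have n0: "n \<ge> 0" unfolding n_def by simp
    have "g \<le> 4 * sqrt (8 * real i / (2 + n))"
      using part1[of X L mu i act play rew t v] a unfolding g_def n_def conf_rad_def by blast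
    then have "g^2 \<le> (4 * sqrt (8 * real i / (2 + n)))^2"
      using g0 by (intro power_mono) auto
    also have "\<dots> = 16 * (8 * real i / (2 + n))" using n0 by (simp add: power_mult_distrib)
    finally have "g^2 * (2 + n) \<le> 128 * real i" using n0 by (simp add: field_simps)
    moreover have "n * g^2 \<le> g^2 * (2 + n)" by (simp add: algebra_simps)
    ultimately have "n * g^2 \<le> 128 * real i" by linarith
    then show "real (nplays play t v) \<le> 128 * real i / (gap X mu v)\<^sup>2"
      using g0 unfolding g_def[symmetric] n_def[symmetric] by (simp add: field_simps)
  qed
qed

end
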